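(* There exists a fragile graph with minimum degree $4$, and there exists a fragile graph with chromatic number $4$.
   Context: All graphs are finite and simple. A graph is $k$-connected if it has at least $k+1$ vertices and no vertex cutset with at most $k-1$ vertices. A graph is fragile if it has no $3$-connected subgraph. *)

theory Defs
  imports Main
begin

definition graph :: "'a set \<Rightarrow> 'a set set \<Rightarrow> bool" where
  "graph V E \<longleftrightarrow> finite V \<and> (\<forall>e\<in>E. \<exists>u v. e = {u, v} \<and> u \<noteq> v \<and> u \<in> V \<and> v \<in> V)"

definition subgraph :: "'a set \<Rightarrow> 'a set set \<Rightarrow> 'a set \<Rightarrow> 'a set set \<Rightarrow> bool" where
  "subgraph V' E' V E \<longleftrightarrow> graph V' E' \<and> V' \<subseteq> V \<and> E' \<subseteq> E"

definition adj :: "'a set set \<Rightarrow> 'a \<Rightarrow> 'a \<Rightarrow> bool" where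
  "adj E u v \<longleftrightarrow> {u, v} \<in> E"

definition connected :: "'a set \<Rightarrow> 'a set set \<Rightarrow> bool" where
  "connected V E \<longleftrightarrow> V \<noteq> {} \<and> (\<forall>u\<in>V. \<forall>v\<in>V. (adj E)\<^sup>*\<^sup>* u v)"

definition del_verts_E :: "'a set set \<Rightarrow> 'a set \<Rightarrow> 'a set set" where
  "del_verts_E E S = {e \<in> E. e \<inter> S = {}}"

definition vertex_cutset :: "'a set \<Rightarrow> 'a set set \<Rightarrow> 'a set \<Rightarrow> bool" where
  "vertex_cutset V E S \<longleftrightarrow> S \<subseteq> V \<and> \<not> connected (V - S) (del_verts_E E S)"

definition k_connected :: "nat \<Rightarrow> 'a set \<Rightarrow> 'a set set \<Rightarrow> bool" where
  "k_connected k V E \<longleftrightarrow> card V \<ge> k + 1 \<and> \<not> (\<exists>S. vertex_cutset V E S \<and> card S < k)"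

definition fragile :: "'a set \<Rightarrow> 'a set set \<Rightarrow> bool" where
  "fragile V E \<longleftrightarrow> \<not> (\<exists>V' E'. subgraph V' E' V E \<and> k_connected 3 V' E')"

definition degree :: "'a set set \<Rightarrow> 'a \<Rightarrow> nat" where
  "degree E v = card {e \<in> E. v \<in> e}"

definition min_degree :: "'a set \<Rightarrow> 'a set set \<Rightarrow> nat" where
  "min_degree V E = Min (degree E ` V)"

definition proper_colouring :: "'a set \<Rightarrow> 'a set set \<Rightarrow> nat \<Rightarrow> ('a \<Rightarrow> nat) \<Rightarrow> bool" where
  "proper_colouring V E k c \<longleftrightarrow> (\<forall>v\<in>V. c v < k) \<and> (\<forall>u v. {u, v} \<in> E \<longrightarrow> c u \<noteq> c v)"

definition chromatic_number :: "'a set \<Rightarrow> 'a set set \<Rightarrow> nat" where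
  "chromatic_number V E = (LEAST k. \<exists>c. proper_colouring V E k c)"

end

theory Submission
  imports Defs
begin

lemma graph_edge_sub: "graph V E \<Longrightarrow> e \<in> E \<Longrightarrow> e \<subseteq> V"
  unfolding graph_def by force

lemma graph_empty: "finite V \<Longrightarrow> graph V {}"
  by (simp add: graph_def)

lemma graph_insert: "graph V E \<Longrightarrow> u \<noteq> v \<Longrightarrow> u \<in> V \<Longrightarrow> v \<in> V \<Longrightarrow> graph V (insert {u,v} E)"
  unfolding graph_def by (simp (no_asm_use)) blast

lemma fragile_small:
  assumes "finite V" "card V \<le> 3" shows "fragile V E"
  unfolding fragile_def
proof
  assume "\<exists>V' E'. subgraph V' E' V E \<and> k_connected 3 V' E'"
  then obtain V' E' where s: "subgraph V' E' V E" and k: "k_connected 3 V' E'" by blast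
  have "V' \<subseteq> V" using s by (simp add: subgraph_def)
  hence "card V' \<le> 3" using assms card_mono order_trans by metis
  thus False using k by (simp add: k_connected_def)
qed

lemma fragile_split:
  assumes g1: "graph A EA" and g2: "graph B EB"
  and V: "V = A \<union> B" and E: "E = EA \<union> EB"
  and c: "card (A \<inter> B) \<le> 2"
  and i1: "\<forall>e\<in>EB. e \<subseteq> A \<longrightarrow> e \<in> EA" and i2: "\<forall>e\<in>EA. e \<subseteq> B \<longrightarrow> e \<in> EB"
  and f1: "fragile A EA" and f2: "fragile B EB"
  shows "fragile V E"
  unfolding fragile_def
proof
  assume "\<exists>V' E'. subgraph V' E' V E \<and> k_connected 3 V' E'"
  then obtain V' E' where s: "subgraph V' E' V E" and k: "k_connected 3 V' E'" by blast
  have gV': "graph V' E'" and VV: "V' \<subseteq> V" and EE: "E' \<subseteq> E" using s by (auto simp: subgraph_def)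
  have fin1: "finite A" using g1 by (simp add: graph_def)
  show False
  proof (cases "V' \<subseteq> A")
    case True
    have "E' \<subseteq> EA"
    proof
      fix e assume e: "e \<in> E'"
      have "e \<subseteq> A" using graph_edge_sub[OF gV' e] True by blast
      thus "e \<in> EA" using EE e E i1 by blast
    qed
    hence "subgraph V' E' A EA" using gV' True by (simp add: subgraph_def)
    thus False using f1 k unfolding fragile_def by blast
  next
    case nT1: False
    show False
    proof (cases "V' \<subseteq> B")
      case True
      have "E' \<subseteq> EB"
      proof
        fix e assume e: "e \<in> E'"
        have "e \<subseteq> B" using graph_edge_sub[OF gV' e] True by blast
        thus "e \<in> EB" using EE e E i2 by blast
      qed
      hence "subgraph V' E' B EB" using gV' True by (simp add: subgraph_def)
      thus False using f2 k unfolding fragile_def by blast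
    next
      case nT2: False
      obtain x where x: "x \<in> V'" "x \<notin> A" using nT1 by blast
      obtain y where y: "y \<in> V'" "y \<notin> B" using nT2 by blast
      define S where "S = V' \<inter> A \<inter> B"
      have cS: "card S < 3"
      proof -
        have "card S \<le> card (A \<inter> B)" unfolding S_def
          by (rule card_mono) (use fin1 in auto)
        thus ?thesis using c by simp
      qed
      have xB: "x \<in> B" using x VV V by blast
      have reach: "z \<in> B - A" if "(adj (del_verts_E E' S))\<^sup>*\<^sup>* x z" for z
        using that
      proof (induction rule: rtranclp_induct)
        case base thus ?case using x xB by blast
      next
        case (step z w)
        have zw: "{z, w} \<in> E'" "{z,w} \<inter> S = {}"
          using step.hyps(2) by (auto simp: adj_def del_verts_E_def)
        have zwV': "{z,w} \<subseteq> V'" using graph_edge_sub[OF gV' zw(1)] .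
        have "{z,w} \<in> EA \<or> {z,w} \<in> EB" using zw(1) EE E by blast
        moreover have "{z,w} \<notin> EA" using graph_edge_sub[OF g1] step.IH by blast
        ultimately have "{z,w} \<subseteq> B" using graph_edge_sub[OF g2] by blast
        thus ?case using zwV' zw(2) unfolding S_def by blast
      qed
      have "vertex_cutset V' E' S"
        unfolding vertex_cutset_def connected_def
        using reach x y unfolding S_def by blast
      thus False using k cS by (auto simp: k_connected_def)
    qed
  qed
qed


lemma fr1: "fragile ({0,2,3}::nat set) {{0,2},{0,3},{2,3}}"
  by (rule fragile_small) simp_all

lemma fr2: "fragile ({1,2,3}::nat set) {{1,2},{1,3},{2,3}}"
  by (rule fragile_small) simp_all

lemma fr3: "fragile ({0,1,2,3}::nat set) {{0,2},{0,3},{1,2},{1,3},{2,3}}"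
  by (rule fragile_split[where A="{0,2,3}" and EA="{{0,2},{0,3},{2,3}}" and B="{1,2,3}" and EB="{{1,2},{1,3},{2,3}}"];
      (rule fr1 fr2)?; (intro graph_insert graph_empty)?; simp?; auto?)

lemma fr4: "fragile ({0,4,5}::nat set) {{0,4},{0,5},{4,5}}"
  by (rule fragile_small) simp_all

lemma fr5: "fragile ({1,4,5}::nat set) {{1,4},{1,5},{4,5}}"
  by (rule fragile_small) simp_all

lemma fr6: "fragile ({0,1,4,5}::nat set) {{0,4},{0,5},{1,4},{1,5},{4,5}}"
  by (rule fragile_split[where A="{0,4,5}" and EA="{{0,4},{0,5},{4,5}}" and B="{1,4,5}" and EB="{{1,4},{1,5},{4,5}}"];
      (rule fr4 fr5)?; (intro graph_insert graph_empty)?; simp?; auto?)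

lemma fr7: "fragile ({0,1,2,3,4,5}::nat set) {{0,2},{0,3},{0,4},{0,5},{1,2},{1,3},{1,4},{1,5},{2,3},{4,5}}"
  by (rule fragile_split[where A="{0,1,2,3}" and EA="{{0,2},{0,3},{1,2},{1,3},{2,3}}" and B="{0,1,4,5}" and EB="{{0,4},{0,5},{1,4},{1,5},{4,5}}"];
      (rule fr3 fr6)?; (intro graph_insert graph_empty)?; simp?; auto?)

lemma fr8: "fragile ({4,5,7}::nat set) {{4,5},{4,7},{5,7}}"
  by (rule fragile_small) simp_all

lemma fr9: "fragile ({0,1,2,3,4,5,7}::nat set) {{0,2},{0,3},{0,4},{0,5},{1,2},{1,3},{1,4},{1,5},{2,3},{4,5},{4,7},{5,7}}"
  by (rule fragile_split[where A="{0,1,2,3,4,5}" and EA="{{0,2},{0,3},{0,4},{0,5},{1,2},{1,3},{1,4},{1,5},{2,3},{4,5}}" and B="{4,5,7}" and EB="{{4,5},{4,7},{5,7}}"];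
      (rule fr7 fr8)?; (intro graph_insert graph_empty)?; simp?; auto?)

lemma fr10: "fragile ({2,3,6}::nat set) {{2,3},{2,6},{3,6}}"
  by (rule fragile_small) simp_all

lemma fr11: "fragile ({0,1,2,3,4,5,6,7}::nat set) {{0,2},{0,3},{0,4},{0,5},{1,2},{1,3},{1,4},{1,5},{2,3},{2,6},{3,6},{4,5},{4,7},{5,7}}"
  by (rule fragile_split[where A="{0,1,2,3,4,5,7}" and EA="{{0,2},{0,3},{0,4},{0,5},{1,2},{1,3},{1,4},{1,5},{2,3},{4,5},{4,7},{5,7}}" and B="{2,3,6}" and EB="{{2,3},{2,6},{3,6}}"];
      (rule fr9 fr10)?; (intro graph_insert graph_empty)?; simp?; auto?)

lemma fr12: "fragile ({8,10,11}::nat set) {{8,10},{8,11},{10,11}}"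
  by (rule fragile_small) simp_all

lemma fr13: "fragile ({9,10,11}::nat set) {{9,10},{9,11},{10,11}}"
  by (rule fragile_small) simp_all

lemma fr14: "fragile ({8,9,10,11}::nat set) {{8,10},{8,11},{9,10},{9,11},{10,11}}"
  by (rule fragile_split[where A="{8,10,11}" and EA="{{8,10},{8,11},{10,11}}" and B="{9,10,11}" and EB="{{9,10},{9,11},{10,11}}"];
      (rule fr12 fr13)?; (intro graph_insert graph_empty)?; simp?; auto?)

lemma fr15: "fragile ({8,12,13}::nat set) {{8,12},{8,13},{12,13}}"
  by (rule fragile_small) simp_all

lemma fr16: "fragile ({9,12,13}::nat set) {{9,12},{9,13},{12,13}}"
  by (rule fragile_small) simp_all

lemma fr17: "fragile ({8,9,12,13}::nat set) {{8,12},{8,13},{9,12},{9,13},{12,13}}"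
  by (rule fragile_split[where A="{8,12,13}" and EA="{{8,12},{8,13},{12,13}}" and B="{9,12,13}" and EB="{{9,12},{9,13},{12,13}}"];
      (rule fr15 fr16)?; (intro graph_insert graph_empty)?; simp?; auto?)

lemma fr18: "fragile ({8,9,10,11,12,13}::nat set) {{8,10},{8,11},{8,12},{8,13},{9,10},{9,11},{9,12},{9,13},{10,11},{12,13}}"
  by (rule fragile_split[where A="{8,9,10,11}" and EA="{{8,10},{8,11},{9,10},{9,11},{10,11}}" and B="{8,9,12,13}" and EB="{{8,12},{8,13},{9,12},{9,13},{12,13}}"];
      (rule fr14 fr17)?; (intro graph_insert graph_empty)?; simp?; auto?)

lemma fr19: "fragile ({7,12,13}::nat set) {{12,13},{12,7},{13,7}}"
  by (rule fragile_small) simp_all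

lemma fr20: "fragile ({7,8,9,10,11,12,13}::nat set) {{8,10},{8,11},{8,12},{8,13},{9,10},{9,11},{9,12},{9,13},{10,11},{12,13},{12,7},{13,7}}"
  by (rule fragile_split[where A="{8,9,10,11,12,13}" and EA="{{8,10},{8,11},{8,12},{8,13},{9,10},{9,11},{9,12},{9,13},{10,11},{12,13}}" and B="{7,12,13}" and EB="{{12,13},{12,7},{13,7}}"];
      (rule fr18 fr19)?; (intro graph_insert graph_empty)?; simp?; auto?)

lemma fr21: "fragile ({6,10,11}::nat set) {{10,11},{10,6},{11,6}}"
  by (rule fragile_small) simp_all

lemma fr22: "fragile ({6,7,8,9,10,11,12,13}::nat set) {{8,10},{8,11},{8,12},{8,13},{9,10},{9,11},{9,12},{9,13},{10,11},{10,6},{11,6},{12,13},{12,7},{13,7}}"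
  by (rule fragile_split[where A="{7,8,9,10,11,12,13}" and EA="{{8,10},{8,11},{8,12},{8,13},{9,10},{9,11},{9,12},{9,13},{10,11},{12,13},{12,7},{13,7}}" and B="{6,10,11}" and EB="{{10,11},{10,6},{11,6}}"];
      (rule fr20 fr21)?; (intro graph_insert graph_empty)?; simp?; auto?)

lemma fr23: "fragile ({0,1,2,3,4,5,6,7,8,9,10,11,12,13}::nat set) {{0,2},{0,3},{0,4},{0,5},{1,2},{1,3},{1,4},{1,5},{2,3},{2,6},{3,6},{4,5},{4,7},{5,7},{8,10},{8,11},{8,12},{8,13},{9,10},{9,11},{9,12},{9,13},{10,11},{10,6},{11,6},{12,13},{12,7},{13,7}}"
  by (rule fragile_split[where A="{0,1,2,3,4,5,6,7}" and EA="{{0,2},{0,3},{0,4},{0,5},{1,2},{1,3},{1,4},{1,5},{2,3},{2,6},{3,6},{4,5},{4,7},{5,7}}" and B="{6,7,8,9,10,11,12,13}" and EB="{{8,10},{8,11},{8,12},{8,13},{9,10},{9,11},{9,12},{9,13},{10,11},{10,6},{11,6},{12,13},{12,7},{13,7}}"];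
      (rule fr11 fr22)?; (intro graph_insert graph_empty)?; simp?; auto?)

definition "GV = ({0,1,2,3,4,5,6,7,8,9,10,11,12,13}::nat set)"
definition "GE = ({{0,2},{0,3},{0,4},{0,5},{1,2},{1,3},{1,4},{1,5},{2,3},{2,6},{3,6},{4,5},{4,7},{5,7},{8,10},{8,11},{8,12},{8,13},{9,10},{9,11},{9,12},{9,13},{10,11},{10,6},{11,6},{12,13},{12,7},{13,7}}::nat set set)"


lemma filt_insert: "{e \<in> insert a A. P e} = (if P a then insert a {e\<in>A. P e} else {e\<in>A. P e})"
  by auto

lemma filt_empty: "{e \<in> {}. P e} = {}"
  by simp

lemma GE_graph: "graph GV GE"
  unfolding GV_def GE_def by (intro graph_insert graph_empty; simp)

definition filt :: "'a \<Rightarrow> 'a set set \<Rightarrow> 'a set set" where "filt v A = {e\<in>A. v \<in> e}"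

lemma filt_ins: "filt v (insert a A) = (if v \<in> a then insert a (filt v A) else filt v A)"
  unfolding filt_def by auto

lemma filt_emp: "filt v {} = {}"
  unfolding filt_def by simp

lemma degree_filt: "degree E v = card (filt v E)"
  unfolding degree_def filt_def ..

lemma GE_deg: "\<forall>v\<in>GV. degree GE v = 4"
  unfolding GV_def GE_def degree_filt
  by (simp add: filt_ins filt_emp doubleton_eq_iff)

lemma GE_frag: "fragile GV GE"
  unfolding GV_def GE_def by (rule fr23)

lemma GE_min: "min_degree GV GE = 4"
proof -
  have "degree GE ` GV = {4}" using GE_deg by (auto simp: GV_def)
  thus ?thesis by (simp add: min_degree_def)
qed

definition "MV = ({0,1,2,3,4,5,6}::nat set)"
definition "ME = ({{0,2},{0,3},{2,3},{1,2},{1,3},{0,4},{0,5},{4,5},{4,6},{5,6},{6,1}}::nat set set)"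

lemma M_graph: "graph MV ME"
  unfolding MV_def ME_def by (intro graph_insert graph_empty; simp)

lemma M_frag: "fragile MV ME"
proof -
  have d1: "fragile ({0,2,3}::nat set) {{0,2},{0,3},{2,3}}" by (rule fragile_small) simp_all
  have d2: "fragile ({1,2,3}::nat set) {{1,2},{1,3},{2,3}}" by (rule fragile_small) simp_all
  have d3: "fragile ({0,1,2,3}::nat set) {{0,2},{0,3},{2,3},{1,2},{1,3}}"
    by (rule fragile_split[where A="{0,2,3}" and EA="{{0,2},{0,3},{2,3}}" and B="{1,2,3}" and EB="{{1,2},{1,3},{2,3}}"];
      (rule d1 d2)?; (intro graph_insert graph_empty)?; simp?; auto?)
  have d4: "fragile ({0,4,5}::nat set) {{0,4},{0,5},{4,5}}" by (rule fragile_small) simp_all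
  have d5: "fragile ({4,5,6}::nat set) {{4,5},{4,6},{5,6}}" by (rule fragile_small) simp_all
  have d6: "fragile ({0,4,5,6}::nat set) {{0,4},{0,5},{4,5},{4,6},{5,6}}"
    by (rule fragile_split[where A="{0,4,5}" and EA="{{0,4},{0,5},{4,5}}" and B="{4,5,6}" and EB="{{4,5},{4,6},{5,6}}"];
      (rule d4 d5)?; (intro graph_insert graph_empty)?; simp?; auto?)
  have d7: "fragile ({1,6}::nat set) {{6,1}}" by (rule fragile_small) simp_all
  have d8: "fragile ({0,1,4,5,6}::nat set) {{0,4},{0,5},{4,5},{4,6},{5,6},{6,1}}"
    by (rule fragile_split[where A="{0,4,5,6}" and EA="{{0,4},{0,5},{4,5},{4,6},{5,6}}" and B="{1,6}" and EB="{{6,1}}"];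
      (rule d6 d7)?; (intro graph_insert graph_empty)?; simp?; auto?)
  show ?thesis unfolding MV_def ME_def
    by (rule fragile_split[where A="{0,1,2,3}" and EA="{{0,2},{0,3},{2,3},{1,2},{1,3}}" and B="{0,1,4,5,6}" and EB="{{0,4},{0,5},{4,5},{4,6},{5,6},{6,1}}"];
      (rule d3 d8)?; (intro graph_insert graph_empty)?; simp?; auto?)
qed

definition "mcol (v::nat) = (if v = 2 \<or> v = 4 then 1 else if v = 3 \<or> v = 5 then 2 else if v = 6 then 3 else (0::nat))"

lemma M_col4: "proper_colouring MV ME 4 mcol"
  unfolding proper_colouring_def MV_def ME_def mcol_def
  by (auto simp: doubleton_eq_iff)

lemma three: "(a::nat) < 3 \<Longrightarrow> b < 3 \<Longrightarrow> x < 3 \<Longrightarrow> y < 3 \<Longrightarrow> a \<noteq> b \<Longrightarrow> x \<noteq> a \<Longrightarrow> x \<noteq> b \<Longrightarrow> y \<noteq> a \<Longrightarrow> y \<noteq> b \<Longrightarrow> y = x"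
  by arith

lemma M_nocol: assumes "proper_colouring MV ME k c" shows "4 \<le> k"
proof (rule ccontr)
  assume "\<not> 4 \<le> k"
  hence k: "k \<le> 3" by simp
  have r: "\<forall>v\<in>MV. c v < k" and e: "\<And>u v. {u,v} \<in> ME \<Longrightarrow> c u \<noteq> c v"
    using assms unfolding proper_colouring_def by auto
  have "c 0 < 3" "c 1 < 3" "c 2 < 3" "c 3 < 3" "c 4 < 3" "c 5 < 3" "c 6 < 3"
    using r k unfolding MV_def by auto
  moreover have "c 0 \<noteq> c 2" "c 0 \<noteq> c 3" "c 2 \<noteq> c 3" "c 1 \<noteq> c 2" "c 1 \<noteq> c 3"
     "c 0 \<noteq> c 4" "c 0 \<noteq> c 5" "c 4 \<noteq> c 5" "c 4 \<noteq> c 6" "c 5 \<noteq> c 6" "c 6 \<noteq> c 1"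
    by (rule e, simp add: ME_def)+
  ultimately have "c 1 = c 0" "c 6 = c 0" using three by metis+
  thus False using \<open>c 6 \<noteq> c 1\<close> by simp
qed

lemma M_chi: "chromatic_number MV ME = 4"
  unfolding chromatic_number_def
  by (rule Least_equality) (use M_col4 M_nocol in blast)+

theorem mainTheorem4:
  shows "(\<exists>(V::nat set) E. graph V E \<and> V \<noteq> {} \<and> fragile V E \<and> min_degree V E = 4) \<and>
         (\<exists>(V::nat set) E. graph V E \<and> fragile V E \<and> chromatic_number V E = 4)"
proof
  show "\<exists>(V::nat set) E. graph V E \<and> V \<noteq> {} \<and> fragile V E \<and> min_degree V E = 4"
    using GE_graph GE_frag GE_min by (auto simp: GV_def)
  show "\<exists>(V::nat set) E. graph V E \<and> fragile V E \<and> chromatic_number V E = 4"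
    using M_graph M_frag M_chi by blast
qed

end
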